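(* At every point of the set $\mathcal{RS}\cap\{1-Z_1\ge0\}\cap\{F_2=0\}\cap\{Z_2-Z_3\ge0\}\cap\{X_1\ge0\}$ (with $Z_1>0$, so that $F_2$ is defined) one has $\langle\nabla F_2,V\rangle\ge0$.
   Context: Fix an integer $m\ge1$, $n=4m+3$ and $\epsilon\in\{0,1\}$. On $\mathbb R^8$ with coordinates $(X_1,X_2,X_3,Z_1,Z_2,Z_3,Z_4,W)$ set $G=X_1^2+2X_2^2+4mX_3^2$, $H=X_1+2X_2+4mX_3$, $R_1=2Z_1Z_2+4mZ_1Z_3$, $R_2=4Z_2-2Z_1Z_2+4mZ_3$, $R_3=(4m+8)Z_4-2Z_1Z_3-4Z_3$, $R_s=R_1+2R_2+4mR_3$, $Q=G+R_s+(n-1)\frac\epsilon2W-1$. $V$ is the vector field with components $V_{X_i}=X_i(G-\frac\epsilon2W-1)+R_i+\frac\epsilon2W$ ($i=1,2,3$), $V_{Z_1}=2Z_1(X_1-X_2)$, $V_{Z_2}=2Z_2(G-\frac\epsilon2W-X_2)$, $V_{Z_3}=2Z_3(G-\frac\epsilon2W+X_2-2X_3)$, $V_{Z_4}=2Z_4(G-\frac\epsilon2W-X_3)$, $V_W=2W(G-\frac\epsilon2W)$. $\mathcal{RS}=\{Q\le0\}\cap\{H\le1\}\cap\{W\ge0\}\cap\{Z_1,Z_2,Z_3,Z_4\ge0\}\cap\{Z_4^2=Z_2Z_3\}$. For a constant $l$ and $Z_1>0$, $F_l=X_2-X_1+l\left(\sqrt{Z_2/Z_1}-\sqrt{Z_1Z_2}\right)$.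 *)

theory Defs
  imports "HOL-Analysis.Analysis"
begin

definition nn :: "nat \<Rightarrow> real" where "nn m = 4 * real m + 3"

definition GG :: "nat \<Rightarrow> real \<Rightarrow> real \<Rightarrow> real \<Rightarrow> real" where
  "GG m x1 x2 x3 = x1^2 + 2 * x2^2 + 4 * real m * x3^2"

definition HH :: "nat \<Rightarrow> real \<Rightarrow> real \<Rightarrow> real \<Rightarrow> real" where
  "HH m x1 x2 x3 = x1 + 2 * x2 + 4 * real m * x3"

definition R1 :: "nat \<Rightarrow> real \<Rightarrow> real \<Rightarrow> real \<Rightarrow> real \<Rightarrow> real" where
  "R1 m z1 z2 z3 z4 = 2 * z1 * z2 + 4 * real m * z1 * z3"

definition R2 :: "nat \<Rightarrow> real \<Rightarrow> real \<Rightarrow> real \<Rightarrow> real \<Rightarrow> real" where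
  "R2 m z1 z2 z3 z4 = 4 * z2 - 2 * z1 * z2 + 4 * real m * z3"

definition R3 :: "nat \<Rightarrow> real \<Rightarrow> real \<Rightarrow> real \<Rightarrow> real \<Rightarrow> real" where
  "R3 m z1 z2 z3 z4 = (4 * real m + 8) * z4 - 2 * z1 * z3 - 4 * z3"

definition Rs :: "nat \<Rightarrow> real \<Rightarrow> real \<Rightarrow> real \<Rightarrow> real \<Rightarrow> real" where
  "Rs m z1 z2 z3 z4 = R1 m z1 z2 z3 z4 + 2 * R2 m z1 z2 z3 z4 + 4 * real m * R3 m z1 z2 z3 z4"

definition QQ :: "nat \<Rightarrow> real \<Rightarrow> real \<Rightarrow> real \<Rightarrow> real \<Rightarrow> real \<Rightarrow> real \<Rightarrow> real \<Rightarrow> real \<Rightarrow> real \<Rightarrow> real" where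
  "QQ m eps x1 x2 x3 z1 z2 z3 z4 w =
     GG m x1 x2 x3 + Rs m z1 z2 z3 z4 + (nn m - 1) * (eps / 2) * w - 1"

definition VX1 :: "nat \<Rightarrow> real \<Rightarrow> real \<Rightarrow> real \<Rightarrow> real \<Rightarrow> real \<Rightarrow> real \<Rightarrow> real \<Rightarrow> real \<Rightarrow> real \<Rightarrow> real" where
  "VX1 m eps x1 x2 x3 z1 z2 z3 z4 w =
     x1 * (GG m x1 x2 x3 - eps / 2 * w - 1) + R1 m z1 z2 z3 z4 + eps / 2 * w"

definition VX2 :: "nat \<Rightarrow> real \<Rightarrow> real \<Rightarrow> real \<Rightarrow> real \<Rightarrow> real \<Rightarrow> real \<Rightarrow> real \<Rightarrow> real \<Rightarrow> real \<Rightarrow> real" where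
  "VX2 m eps x1 x2 x3 z1 z2 z3 z4 w =
     x2 * (GG m x1 x2 x3 - eps / 2 * w - 1) + R2 m z1 z2 z3 z4 + eps / 2 * w"

definition VX3 :: "nat \<Rightarrow> real \<Rightarrow> real \<Rightarrow> real \<Rightarrow> real \<Rightarrow> real \<Rightarrow> real \<Rightarrow> real \<Rightarrow> real \<Rightarrow> real \<Rightarrow> real" where
  "VX3 m eps x1 x2 x3 z1 z2 z3 z4 w =
     x3 * (GG m x1 x2 x3 - eps / 2 * w - 1) + R3 m z1 z2 z3 z4 + eps / 2 * w"

definition VZ1 :: "nat \<Rightarrow> real \<Rightarrow> real \<Rightarrow> real \<Rightarrow> real \<Rightarrow> real \<Rightarrow> real \<Rightarrow> real \<Rightarrow> real \<Rightarrow> real \<Rightarrow> real" where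
  "VZ1 m eps x1 x2 x3 z1 z2 z3 z4 w = 2 * z1 * (x1 - x2)"

definition VZ2 :: "nat \<Rightarrow> real \<Rightarrow> real \<Rightarrow> real \<Rightarrow> real \<Rightarrow> real \<Rightarrow> real \<Rightarrow> real \<Rightarrow> real \<Rightarrow> real \<Rightarrow> real" where
  "VZ2 m eps x1 x2 x3 z1 z2 z3 z4 w = 2 * z2 * (GG m x1 x2 x3 - eps / 2 * w - x2)"

definition VZ3 :: "nat \<Rightarrow> real \<Rightarrow> real \<Rightarrow> real \<Rightarrow> real \<Rightarrow> real \<Rightarrow> real \<Rightarrow> real \<Rightarrow> real \<Rightarrow> real \<Rightarrow> real" where
  "VZ3 m eps x1 x2 x3 z1 z2 z3 z4 w = 2 * z3 * (GG m x1 x2 x3 - eps / 2 * w + x2 - 2 * x3)"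

definition VZ4 :: "nat \<Rightarrow> real \<Rightarrow> real \<Rightarrow> real \<Rightarrow> real \<Rightarrow> real \<Rightarrow> real \<Rightarrow> real \<Rightarrow> real \<Rightarrow> real \<Rightarrow> real" where
  "VZ4 m eps x1 x2 x3 z1 z2 z3 z4 w = 2 * z4 * (GG m x1 x2 x3 - eps / 2 * w - x3)"

definition VW :: "nat \<Rightarrow> real \<Rightarrow> real \<Rightarrow> real \<Rightarrow> real \<Rightarrow> real \<Rightarrow> real \<Rightarrow> real \<Rightarrow> real \<Rightarrow> real \<Rightarrow> real" where
  "VW m eps x1 x2 x3 z1 z2 z3 z4 w = 2 * w * (GG m x1 x2 x3 - eps / 2 * w)"

definition RS :: "nat \<Rightarrow> real \<Rightarrow> real \<Rightarrow> real \<Rightarrow> real \<Rightarrow> real \<Rightarrow> real \<Rightarrow> real \<Rightarrow> real \<Rightarrow> real \<Rightarrow> bool" where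
  "RS m eps x1 x2 x3 z1 z2 z3 z4 w \<longleftrightarrow>
     QQ m eps x1 x2 x3 z1 z2 z3 z4 w \<le> 0 \<and> HH m x1 x2 x3 \<le> 1 \<and> w \<ge> 0 \<and>
     z1 \<ge> 0 \<and> z2 \<ge> 0 \<and> z3 \<ge> 0 \<and> z4 \<ge> 0 \<and> z4^2 = z2 * z3"

text \<open>F_l (depends only on X1, X2, Z1, Z2; meaningful for Z1 > 0).\<close>

definition FF :: "real \<Rightarrow> real \<Rightarrow> real \<Rightarrow> real \<Rightarrow> real \<Rightarrow> real" where
  "FF l x1 x2 z1 z2 = x2 - x1 + l * (sqrt (z2 / z1) - sqrt (z1 * z2))"

text \<open>Derivative of F_l along V at a point: derivative at t = 0 of F_l along the line p + t V(p).
  Where F_l is differentiable this is exactly the inner product of grad F_l with V.\<close>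

definition FF_along_V :: "real \<Rightarrow> nat \<Rightarrow> real \<Rightarrow> real \<Rightarrow> real \<Rightarrow> real \<Rightarrow> real \<Rightarrow> real \<Rightarrow> real \<Rightarrow> real \<Rightarrow> real \<Rightarrow> real \<Rightarrow> real" where
  "FF_along_V l m eps x1 x2 x3 z1 z2 z3 z4 w t =
     FF l (x1 + t * VX1 m eps x1 x2 x3 z1 z2 z3 z4 w)
          (x2 + t * VX2 m eps x1 x2 x3 z1 z2 z3 z4 w)
          (z1 + t * VZ1 m eps x1 x2 x3 z1 z2 z3 z4 w)
          (z2 + t * VZ2 m eps x1 x2 x3 z1 z2 z3 z4 w)"

end

theory Submission
  imports Defs
begin

lemma dlem:
  fixes a u A B P Q p q :: real
  assumes "a > 0" "u > 0"
  shows "((\<lambda>t. FF 2 (q + t*Q) (p + t*P) (a^2 + t*B) (u^2 + t*A)) has_real_derivative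
     (P - Q + 2*((A*a^2 - u^2*B)/(a^4 * 2 * (u/a)) - (B*u^2+a^2*A)/(2 * (a*u))))) (at 0)"
proof -
  have s1: "sqrt (u^2/a^2) = u/a" using assms by (simp add: real_sqrt_divide)
  have s2: "sqrt (a^2*u^2) = a*u" using assms by (simp add: real_sqrt_mult)
  show ?thesis
  unfolding FF_def
  using assms apply (auto intro!: derivative_eq_intros simp: s1 s2 mult.commute[of a u])
  subgoal by (smt (verit) divide_nonneg_nonneg zero_le_power2)
  subgoal by (smt (verit) mult_nonneg_nonneg zero_le_power2)
  apply (simp add: field_simps power2_eq_square)
  done
qed

lemma dlem0:
  fixes z1 B P Q p q :: real
  shows "((\<lambda>t. FF 2 (q + t*Q) (p + t*P) (z1 + t*B) (0 + t*0)) has_real_derivative (P - Q)) (at 0)"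
  unfolding FF_def
  by (auto intro!: derivative_eq_intros)

lemma alg1:
  fixes a u X Y :: real assumes "a > 0" "u > 0"
  shows "2*(((2*u^2*Y)*a^2 - u^2*(2*a^2*X))/(a^4 * 2 * (u/a)) - ((2*a^2*X)*u^2+a^2*(2*u^2*Y))/(2 * (a*u)))
     = 2*u*(1-a^2)/a*Y - 2*u*(1/a+a)*X"
  using assms by (simp add: field_simps power2_eq_square) algebra

lemma alg2:
  fixes a u x1 x2 z3 G M :: real assumes "a > 0" "u > 0" "x2 = x1 + 2*u*a - 2*u/a"
  shows "(x2 - x1)*(G - 1) + (4*u^2 - 2*a^2*u^2 + 4*M*z3) - (2*a^2*u^2 + 4*M*a^2*z3)
     + (2*u*(1-a^2)/a*(G - x2) - 2*u*(1/a+a)*(x1 - x2)) = (1-a^2)/a * (2*u*(1-x1-2*u*a) + 4*a*M*z3)"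
  using assms by (simp add: field_simps power2_eq_square) algebra

theorem proposition4p1:
  fixes m :: nat and eps x1 x2 x3 z1 z2 z3 z4 w :: real
  assumes "m \<ge> 1" and "eps \<in> {0, 1}"
    and "RS m eps x1 x2 x3 z1 z2 z3 z4 w"
    and "1 - z1 \<ge> 0" and "z1 > 0"
    and "FF 2 x1 x2 z1 z2 = 0"
    and "z2 - z3 \<ge> 0" and "x1 \<ge> 0"
  shows "\<exists>D. (FF_along_V 2 m eps x1 x2 x3 z1 z2 z3 z4 w has_real_derivative D) (at 0) \<and> D \<ge> 0"
proof -
  have RS: "QQ m eps x1 x2 x3 z1 z2 z3 z4 w \<le> 0" "HH m x1 x2 x3 \<le> 1" "w \<ge> 0"
     "z1 \<ge> 0" "z2 \<ge> 0" "z3 \<ge> 0" "z4 \<ge> 0" "z4^2 = z2 * z3"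
    using assms(3) unfolding RS_def by auto
  have fl: "FF_along_V 2 m eps x1 x2 x3 z1 z2 z3 z4 w = (\<lambda>t. FF 2
          (x1 + t * VX1 m eps x1 x2 x3 z1 z2 z3 z4 w)
          (x2 + t * VX2 m eps x1 x2 x3 z1 z2 z3 z4 w)
          (z1 + t * VZ1 m eps x1 x2 x3 z1 z2 z3 z4 w)
          (z2 + t * VZ2 m eps x1 x2 x3 z1 z2 z3 z4 w))"
    by (rule ext) (simp add: FF_along_V_def)
  show ?thesis
  proof (cases "z2 = 0")
    case True
    then have z3: "z3 = 0" using RS assms(7) by auto
    have "x2 = x1" using assms(6) True unfolding FF_def by simp
    have VZ2: "VZ2 m eps x1 x2 x3 z1 z2 z3 z4 w = 0" using True by (simp add: VZ2_def)
    have "VX2 m eps x1 x2 x3 z1 z2 z3 z4 w - VX1 m eps x1 x2 x3 z1 z2 z3 z4 w = 0"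
      using True z3 \<open>x2 = x1\<close> by (simp add: VX1_def VX2_def R1_def R2_def)
    moreover have "(FF_along_V 2 m eps x1 x2 x3 z1 z2 z3 z4 w has_real_derivative
       (VX2 m eps x1 x2 x3 z1 z2 z3 z4 w - VX1 m eps x1 x2 x3 z1 z2 z3 z4 w)) (at 0)"
      unfolding fl VZ2 using dlem0 True by simp
    ultimately show ?thesis by auto
  next
    case False
    define a where "a = sqrt z1"
    define u where "u = sqrt z2"
    have a0: "a > 0" using assms(5) a_def by simp
    have u0: "u > 0" using RS False u_def by simp
    have z1a: "z1 = a^2" using a_def assms(5) by simp
    have z2u: "z2 = u^2" using u_def RS by simp
    have a1: "a \<le> 1" using assms(4) a_def by simp
    define c where "c = 2*u/a"
    have ac: "a * c = 2*u" using a0 c_def by simp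
    have sq1: "sqrt (z2/z1) = u/a" using a0 u0 z1a z2u by (simp add: real_sqrt_divide)
    have sq2: "sqrt (z1*z2) = a*u" using a0 u0 z1a z2u by (simp add: real_sqrt_mult)
    have x2e: "x2 = x1 + 2*u*a - c" using assms(6) sq1 sq2 unfolding FF_def c_def by (simp add: algebra_simps)
    define vx1 where "vx1 = VX1 m eps x1 x2 x3 z1 z2 z3 z4 w"
    define vx2 where "vx2 = VX2 m eps x1 x2 x3 z1 z2 z3 z4 w"
    define vz1 where "vz1 = VZ1 m eps x1 x2 x3 z1 z2 z3 z4 w"
    define vz2 where "vz2 = VZ2 m eps x1 x2 x3 z1 z2 z3 z4 w"
    define D where "D = vx2 - vx1 + 2*((vz2 * a^2 - u^2 * vz1)/(a^4 * 2 * (u/a)) - (vz1 * u^2+a^2 * vz2)/(2 * (a*u)))"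
    have der: "(FF_along_V 2 m eps x1 x2 x3 z1 z2 z3 z4 w has_real_derivative D) (at 0)"
      unfolding fl D_def vx1_def[symmetric] vx2_def[symmetric] vz1_def[symmetric] vz2_def[symmetric]
      unfolding z1a z2u using dlem[OF a0 u0] by simp
    have x2e': "x2 = x1 + 2*u*a - 2*u/a" using x2e c_def by simp
    have Deq: "D = (1-a^2)/a * (2*u*(1-x1-2*u*a) + 4*a*m*z3)"
    proof -
      define G where "G = GG m x1 x2 x3 - eps/2*w"
      have e1: "vz2 = 2*u^2*(G - x2)" unfolding vz2_def VZ2_def G_def z2u by simp
      have e2: "vz1 = 2*a^2*(x1 - x2)" unfolding vz1_def VZ1_def z1a by simp
      have e3: "vx2 - vx1 = (x2 - x1)*(G - 1) + (4*u^2 - 2*a^2*u^2 + 4*real m*z3) - (2*a^2*u^2 + 4*real m*a^2*z3)"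
        unfolding vx1_def vx2_def VX1_def VX2_def R1_def R2_def G_def z1a z2u
        by (simp add: field_simps)
      have "D = (x2 - x1)*(G - 1) + (4*u^2 - 2*a^2*u^2 + 4*real m*z3) - (2*a^2*u^2 + 4*real m*a^2*z3)
         + (2*u*(1-a^2)/a*(G - x2) - 2*u*(1/a+a)*(x1 - x2))"
        unfolding D_def e1 e2 using alg1[OF a0 u0, of "G - x2" "x1 - x2"] e3 by simp
      also have "\<dots> = (1-a^2)/a * (2*u*(1-x1-2*u*a) + 4*a*real m*z3)"
        by (rule alg2[OF a0 u0 x2e'])
      finally show ?thesis .
    qed
    have z34: "z3 \<le> z4"
    proof -
      have "z3 * z3 \<le> z2 * z3" using RS(6) assms(7) by (intro mult_right_mono) auto
      then have "z3^2 \<le> z4^2" using RS(8) by (simp only: power2_eq_square)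
      then show ?thesis using RS(7) by (rule power2_le_imp_le)
    qed
    have mz: "real m * z1 \<le> real m" using assms(4) by (simp add: mult_left_le)
    have mm: "(8*real m + 4*real m*z1) * z3 \<le> 4*real m*(4*real m+8) * z4"
    proof -
      have "(8*real m + 4*real m*z1) * z3 \<le> (12*real m) * z3"
        using RS(6) mz by (intro mult_right_mono) auto
      also have "\<dots> \<le> 4*real m*(4*real m+8) * z3" using RS(6) assms(1) by (intro mult_right_mono) auto
      also have "\<dots> \<le> 4*real m*(4*real m+8) * z4" using z34 by (intro mult_left_mono) auto
      finally show ?thesis .
    qed
    have Rse: "Rs m z1 z2 z3 z4 = 8*z2 - 2*z1*z2 + (4*real m*(4*real m+8) * z4 - (8*real m + 4*real m*z1) * z3)"
      unfolding Rs_def R1_def R2_def R3_def by (simp add: algebra_simps)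
    have z12: "z1*z2 = a^2*u^2" using z1a z2u by simp
    have Rsge: "Rs m z1 z2 z3 z4 \<ge> 8*u^2 - 2*a^2*u^2"
      using mm Rse z12 z2u by linarith
    have epsw: "(nn m - 1) * (eps / 2) * w \<ge> 0"
      using assms(2) RS(3) by (auto simp: nn_def)
    have Gge: "GG m x1 x2 x3 \<ge> x1^2 + 2*x2^2" unfolding GG_def by simp
    have le1: "x1^2 + 2*x2^2 + 8*u^2 - 2*a^2*u^2 \<le> 1"
      using RS(1) Rsge epsw Gge unfolding QQ_def by linarith
    have ident: "x1^2 + 2*x2^2 + 8*u^2 - 2*a^2*u^2 - (x1+2*u*a)^2 = (1/2)*(2*c - 2*x1 - 2*u*a)^2"
    proof -
      have "8*u^2 = 4*u*(a*c)" using ac by (simp add: power2_eq_square)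
      then show ?thesis unfolding x2e by (simp add: algebra_simps power2_eq_square)
    qed
    have "(1/2)*(2*c - 2*x1 - 2*u*a)^2 \<ge> 0" by simp
    then have "(x1+2*u*a)^2 \<le> 1" using le1 ident by linarith
    then have "(x1+2*u*a)^2 \<le> 1^2" by simp
    then have key: "x1 + 2*u*a \<le> 1" by (rule power2_le_imp_le) simp
    have p1: "(1-a^2)/a \<ge> 0"
    proof -
      have "a^2 \<le> 1" using a0 a1 by (simp add: power_le_one)
      then show ?thesis using a0 by simp
    qed
    have p2: "2*u*(1-x1-2*u*a) + 4*a*real m*z3 \<ge> 0"
      using u0 key a0 RS(6) by (intro add_nonneg_nonneg mult_nonneg_nonneg) auto
    have "D \<ge> 0" unfolding Deq using p1 p2 by (rule mult_nonneg_nonneg)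
    then show ?thesis using der by auto
  qed
qed

end
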